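(* In the Data Revocation Game, let $\mathcal I=\mathcal I_1\cup\mathcal I_2\cup\{k\}$ be a partition (disjoint union, $k\notin\mathcal I_1\cup\mathcal I_2$). Put $A_k=\xi_k\ell_k+\theta_k\sum_{i\in\mathcal I_1}\ell_i^2$ and $$\hat d_k=A_k^{-1}-\sum_{j\in\mathcal I_2}d_j^{\max}-\epsilon_k .$$ For $i\in\mathcal I_1$ put $B_i=\xi_i\ell_i+\theta_i\sum_{i'\in\mathcal I_1\setminus\{i\}}\ell_{i'}^2+\theta_i\big(1-\hat d_k/d_k^{\max}\big)\ell_k^2$, and for $j\in\mathcal I_2$ put $B_j=\xi_j\ell_j+\theta_j\sum_{i\in\mathcal I_1}\ell_i^2+\theta_j\big(1-\hat d_k/d_k^{\max}\big)\ell_k^2$. Suppose (a) $\epsilon_i\ge B_i^{-1}-A_k^{-1}+\epsilon_k$ for all $i\in\mathcal I_1$; (b) $\epsilon_j\le B_j^{-1}-A_k^{-1}+\epsilon_k$ for all $j\in\mathcal I_2$; (c) $A_k^{-1}-\sum_{j\in\mathcal I_2\cup\{k\}}d_j^{\max}<\epsilon_k<A_k^{-1}-\sum_{j\in\mathcal I_2}d_j^{\max}$. Then $\hat d_k\in(0,d_k^{\max})$ and the profile $d_i^*=0$ for $i\in\mathcal I_1$, $d_k^*=\hat d_k$, $d_j^*=d_j^{\max}$ for $j\in\mathcal I_2$ is a Nash equilibrium.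
   Context: Data Revocation Game: a finite set of users $\mathcal I=\{1,\dots,I\}$, $I\ge 2$. Each user $i$ has parameters $d_i^{\max}>0$, $\epsilon_i>0$, $\xi_i>0$, $\ell_i>0$, $\theta_i\ge 0$. Each user chooses $d_i\in[0,d_i^{\max}]$. Payoff $$U_i(d_i,\boldsymbol{d_{-i}})=\ln\Big(\sum_{j\in\mathcal I}d_j+\epsilon_i\Big)-\xi_i d_i\ell_i-\theta_i d_i\sum_{j\neq i}\Big(1-\frac{d_j}{d_j^{\max}}\Big)\ell_j^2 .$$ A Nash equilibrium is a profile $(d_i^* )$ with $d_i^*\in[0,d_i^{\max}]$ and $U_i(d_i^*,\boldsymbol{d_{-i}^*})\ge U_i(d_i,\boldsymbol{d_{-i}^*})$ for all $i$ and all $d_i\in[0,d_i^{\max}]$. *)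

theory Defs
  imports Complex_Main
begin

definition payoff ::
  "'u set \<Rightarrow> ('u \<Rightarrow> real) \<Rightarrow> ('u \<Rightarrow> real) \<Rightarrow> ('u \<Rightarrow> real) \<Rightarrow> ('u \<Rightarrow> real)
    \<Rightarrow> ('u \<Rightarrow> real) \<Rightarrow> ('u \<Rightarrow> real) \<Rightarrow> 'u \<Rightarrow> real" where
  "payoff I dmax eps xi l theta d i =
     ln ((\<Sum>j\<in>I. d j) + eps i) - xi i * d i * l i
     - theta i * d i * (\<Sum>j\<in>I - {i}. (1 - d j / dmax j) * (l j)\<^sup>2)"

definition nash_equilibrium ::
  "'u set \<Rightarrow> ('u \<Rightarrow> real) \<Rightarrow> ('u \<Rightarrow> real) \<Rightarrow> ('u \<Rightarrow> real) \<Rightarrow> ('u \<Rightarrow> real)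
    \<Rightarrow> ('u \<Rightarrow> real) \<Rightarrow> ('u \<Rightarrow> real) \<Rightarrow> bool" where
  "nash_equilibrium I dmax eps xi l theta d \<longleftrightarrow>
     (\<forall>i\<in>I. 0 \<le> d i \<and> d i \<le> dmax i \<and>
        (\<forall>x. 0 \<le> x \<and> x \<le> dmax i \<longrightarrow>
           payoff I dmax eps xi l theta (d(i := x)) i \<le> payoff I dmax eps xi l theta d i))"

end

theory Submission
  imports Defs
begin

lemma payoff_upd:
  assumes "finite I" "i \<in> I"
  shows "payoff I dmax eps xi l theta (d(i:=x)) i =
     ln ((\<Sum>j\<in>I-{i}. d j) + x + eps i)
     - x * (xi i * l i + theta i * (\<Sum>j\<in>I-{i}. (1 - d j / dmax j) * (l j)\<^sup>2))"
proof -
  have s: "(\<Sum>j\<in>I. (d(i:=x)) j) = (\<Sum>j\<in>I-{i}. d j) + x"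
    using assms by (simp add: sum.remove sum.cong[of "I-{i}" "I-{i}" "d(i:=x)" d])
  have p: "(\<Sum>j\<in>I-{i}. (1 - (d(i:=x)) j / dmax j) * (l j)\<^sup>2)
         = (\<Sum>j\<in>I-{i}. (1 - d j / dmax j) * (l j)\<^sup>2)"
    by (rule sum.cong) auto
  show ?thesis unfolding payoff_def s p by (simp add: algebra_simps)
qed

lemma concave_step:
  fixes a x x0 c :: real
  assumes "a + x0 > 0" "a + x > 0" "(x - x0) * (1 / (a + x0) - c) \<le> 0"
  shows "ln (a + x) - x * c \<le> ln (a + x0) - x0 * c"
proof -
  have "ln ((a + x) / (a + x0)) \<le> (a + x) / (a + x0) - 1"
    using assms by (intro ln_le_minus_one) simp
  hence "ln (a + x) - ln (a + x0) \<le> (x - x0) / (a + x0)"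
    using assms by (simp add: ln_div field_simps)
  moreover have "(x - x0) / (a + x0) - (x - x0) * c \<le> 0"
    using assms(3) by (simp add: algebra_simps)
  ultimately show ?thesis by (simp add: algebra_simps)
qed

theorem proposition3:
  fixes I I1 I2 :: "'u set" and k :: 'u
    and dmax eps xi l theta :: "'u \<Rightarrow> real"
    and A hatd :: real and B :: "'u \<Rightarrow> real"
  assumes finI: "finite I" and cardI: "card I \<ge> 2"
    and pos: "\<forall>i\<in>I. dmax i > 0 \<and> eps i > 0 \<and> xi i > 0 \<and> l i > 0 \<and> theta i \<ge> 0"
    and part: "I = I1 \<union> I2 \<union> {k}" "I1 \<inter> I2 = {}" "k \<notin> I1" "k \<notin> I2"
    and A_def: "A = xi k * l k + theta k * (\<Sum>i\<in>I1. (l i)\<^sup>2)"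
    and hatd_def: "hatd = 1 / A - (\<Sum>j\<in>I2. dmax j) - eps k"
    and B1_def: "\<forall>i\<in>I1. B i = xi i * l i + theta i * (\<Sum>i'\<in>I1 - {i}. (l i')\<^sup>2)
                              + theta i * (1 - hatd / dmax k) * (l k)\<^sup>2"
    and B2_def: "\<forall>j\<in>I2. B j = xi j * l j + theta j * (\<Sum>i\<in>I1. (l i)\<^sup>2)
                              + theta j * (1 - hatd / dmax k) * (l k)\<^sup>2"
    and a: "\<forall>i\<in>I1. eps i \<ge> 1 / B i - 1 / A + eps k"
    and b: "\<forall>j\<in>I2. eps j \<le> 1 / B j - 1 / A + eps k"
    and c: "1 / A - (\<Sum>j\<in>I2 \<union> {k}. dmax j) < eps k" "eps k < 1 / A - (\<Sum>j\<in>I2. dmax j)"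
  shows "0 < hatd \<and> hatd < dmax k \<and>
         nash_equilibrium I dmax eps xi l theta
           (\<lambda>i. if i \<in> I1 then 0 else if i = k then hatd else dmax i)"
proof -
  define dd where "dd = (\<lambda>i. if i \<in> I1 then 0 else if i = k then hatd else dmax i)"
  have fin1: "finite I1" and fin2: "finite I2" using finI part(1) by auto
  have h0: "0 < hatd" using c(2) hatd_def by simp
  have sk: "(\<Sum>j\<in>I2 \<union> {k}. dmax j) = (\<Sum>j\<in>I2. dmax j) + dmax k"
    using fin2 part(4) by simp
  have h1: "hatd < dmax k" using c(1) hatd_def sk by simp
  have kI: "k \<in> I" using part(1) by auto
  have dm2: "\<And>j. j \<in> I2 \<Longrightarrow> dmax j > 0" using pos part(1) by auto
  have z2: "\<And>j. j \<in> I2 \<Longrightarrow> (1 - dd j / dmax j) * (l j)\<^sup>2 = 0"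
  proof -
    fix j assume j: "j \<in> I2"
    hence "dd j = dmax j" using part by (auto simp: dd_def)
    thus "(1 - dd j / dmax j) * (l j)\<^sup>2 = 0" using dm2[OF j] by simp
  qed
  have Apos: "A > 0"
  proof -
    have "xi k * l k > 0" using pos kI by simp
    moreover have "theta k * (\<Sum>i\<in>I1. (l i)\<^sup>2) \<ge> 0" using pos kI
      by (intro mult_nonneg_nonneg sum_nonneg) auto
    ultimately show ?thesis using A_def by simp
  qed
  have dd_nonneg: "\<And>i. i \<in> I \<Longrightarrow> 0 \<le> dd i" using pos h0 unfolding dd_def by auto
  have dd_le: "\<And>i. i \<in> I \<Longrightarrow> dd i \<le> dmax i" using pos h1 unfolding dd_def by auto
  define T where "T = (\<Sum>j\<in>I. dd j)"
  have T_eq: "T = 1 / A - eps k"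
  proof -
    have "T = (\<Sum>j\<in>I1. dd j) + (\<Sum>j\<in>I2 \<union> {k}. dd j)"
      unfolding T_def using part fin1 fin2
      by (subst sum.union_disjoint[symmetric]) (auto simp: Un_assoc)
    also have "(\<Sum>j\<in>I1. dd j) = 0" by (simp add: dd_def)
    also have "(\<Sum>j\<in>I2 \<union> {k}. dd j) = (\<Sum>j\<in>I2. dd j) + dd k"
      using fin2 part(4) by simp
    also have "(\<Sum>j\<in>I2. dd j) = (\<Sum>j\<in>I2. dmax j)"
      using part by (intro sum.cong) (auto simp: dd_def)
    also have "dd k = hatd" using part by (simp add: dd_def)
    finally show ?thesis using hatd_def by simp
  qed
  have main: "payoff I dmax eps xi l theta (dd(i := x)) i \<le> payoff I dmax eps xi l theta dd i"
    if iI: "i \<in> I" and x0: "0 \<le> x" and x1: "x \<le> dmax i" for i x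
  proof -
    define S where "S = (\<Sum>j\<in>I-{i}. dd j)"
    define C where "C = xi i * l i + theta i * (\<Sum>j\<in>I-{i}. (1 - dd j / dmax j) * (l j)\<^sup>2)"
    have S_eq: "S + dd i = T" unfolding S_def T_def using finI iI
      by (simp add: sum.remove)
    have S0: "S \<ge> 0" unfolding S_def using dd_nonneg by (intro sum_nonneg) auto
    have ei: "eps i > 0" using pos iI by simp
    have e1: "payoff I dmax eps xi l theta (dd(i := x)) i = ln ((S + eps i) + x) - x * C"
      using payoff_upd[OF finI iI, of dmax eps xi l theta dd x] unfolding S_def C_def
      by (simp add: algebra_simps)
    have e2: "payoff I dmax eps xi l theta dd i = ln ((S + eps i) + dd i) - dd i * C"
      using payoff_upd[OF finI iI, of dmax eps xi l theta dd "dd i"] unfolding S_def C_def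
      by (simp add: algebra_simps)
    have TA: "T + eps i = 1 / A - eps k + eps i" using T_eq by simp
    have key: "(x - dd i) * (1 / (T + eps i) - C) \<le> 0"
    proof -
      consider "i \<in> I1" | "i = k" | "i \<in> I2" using iI part(1) by auto
      then show ?thesis
      proof cases
        case 1
        have dz: "dd i = 0" using 1 by (simp add: dd_def)
        have dec: "I - {i} = (I1 - {i}) \<union> (I2 \<union> {k})" using part 1 by auto
        have "(\<Sum>j\<in>I-{i}. (1 - dd j / dmax j) * (l j)\<^sup>2)
              = (\<Sum>j\<in>I1 - {i}. (1 - dd j / dmax j) * (l j)\<^sup>2)
                + (\<Sum>j\<in>I2 \<union> {k}. (1 - dd j / dmax j) * (l j)\<^sup>2)"
          unfolding dec using fin1 fin2 part by (intro sum.union_disjoint) auto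
        also have "(\<Sum>j\<in>I1 - {i}. (1 - dd j / dmax j) * (l j)\<^sup>2) = (\<Sum>j\<in>I1 - {i}. (l j)\<^sup>2)"
          by (intro sum.cong) (auto simp: dd_def)
        also have "(\<Sum>j\<in>I2 \<union> {k}. (1 - dd j / dmax j) * (l j)\<^sup>2)
              = (\<Sum>j\<in>I2. (1 - dd j / dmax j) * (l j)\<^sup>2) + (1 - dd k / dmax k) * (l k)\<^sup>2"
          using fin2 part(4) by simp
        also have "(\<Sum>j\<in>I2. (1 - dd j / dmax j) * (l j)\<^sup>2) = 0"
          using z2 by (intro sum.neutral) auto
        also have "dd k = hatd" using part by (simp add: dd_def)
        finally have P: "(\<Sum>j\<in>I-{i}. (1 - dd j / dmax j) * (l j)\<^sup>2)
            = (\<Sum>j\<in>I1 - {i}. (l j)\<^sup>2) + (1 - hatd / dmax k) * (l k)\<^sup>2" by simp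
        have "C = B i" unfolding C_def P using B1_def 1 by (simp add: distrib_left mult.assoc)
        have Bpos: "B i > 0"
        proof -
          have "xi i * l i > 0" using pos iI by simp
          moreover have "theta i * (\<Sum>i'\<in>I1 - {i}. (l i')\<^sup>2) \<ge> 0" using pos iI
            by (intro mult_nonneg_nonneg sum_nonneg) auto
          moreover have "theta i * (1 - hatd / dmax k) * (l k)\<^sup>2 \<ge> 0"
            using pos iI kI h1 by (intro mult_nonneg_nonneg) auto
          ultimately show ?thesis using B1_def 1 by simp
        qed
        have "1 / B i - 1 / A + eps k \<le> eps i" using a 1 by blast
        hence "T + eps i \<ge> 1 / B i" using TA by linarith
        moreover have "0 < 1 / B i" using Bpos by simp
        moreover have "0 < T + eps i" using calculation by linarith
        ultimately have "1 / (T + eps i) \<le> 1 / (1 / B i)"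
          by (intro divide_left_mono mult_pos_pos) auto
        hence "1 / (T + eps i) \<le> B i" by simp
        then show ?thesis using dz x0 \<open>C = B i\<close> by (simp add: mult_nonneg_nonpos)
      next
        case 2
        have dec: "I - {i} = I1 \<union> I2" using part 2 by auto
        have "(\<Sum>j\<in>I-{i}. (1 - dd j / dmax j) * (l j)\<^sup>2)
              = (\<Sum>j\<in>I1. (1 - dd j / dmax j) * (l j)\<^sup>2)
                + (\<Sum>j\<in>I2. (1 - dd j / dmax j) * (l j)\<^sup>2)"
          unfolding dec using fin1 fin2 part by (intro sum.union_disjoint) auto
        also have "(\<Sum>j\<in>I1. (1 - dd j / dmax j) * (l j)\<^sup>2) = (\<Sum>j\<in>I1. (l j)\<^sup>2)"
          by (intro sum.cong) (auto simp: dd_def)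
        also have "(\<Sum>j\<in>I2. (1 - dd j / dmax j) * (l j)\<^sup>2) = 0"
          using z2 by (intro sum.neutral) auto
        finally have "C = A" unfolding C_def A_def using 2 by simp
        moreover have "T + eps i = 1 / A" using TA 2 by simp
        ultimately show ?thesis using Apos by simp
      next
        case 3
        have dm: "dd i = dmax i" using 3 part by (auto simp: dd_def)
        have dec: "I - {i} = I1 \<union> ((I2 - {i}) \<union> {k})" using part 3 by auto
        have "(\<Sum>j\<in>I-{i}. (1 - dd j / dmax j) * (l j)\<^sup>2)
              = (\<Sum>j\<in>I1. (1 - dd j / dmax j) * (l j)\<^sup>2)
                + (\<Sum>j\<in>(I2 - {i}) \<union> {k}. (1 - dd j / dmax j) * (l j)\<^sup>2)"
          unfolding dec using fin1 fin2 part by (intro sum.union_disjoint) auto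
        also have "(\<Sum>j\<in>I1. (1 - dd j / dmax j) * (l j)\<^sup>2) = (\<Sum>j\<in>I1. (l j)\<^sup>2)"
          by (intro sum.cong) (auto simp: dd_def)
        also have "(\<Sum>j\<in>(I2 - {i}) \<union> {k}. (1 - dd j / dmax j) * (l j)\<^sup>2)
              = (\<Sum>j\<in>I2 - {i}. (1 - dd j / dmax j) * (l j)\<^sup>2) + (1 - dd k / dmax k) * (l k)\<^sup>2"
          using fin2 part(4) by simp
        also have "(\<Sum>j\<in>I2 - {i}. (1 - dd j / dmax j) * (l j)\<^sup>2) = 0"
          using z2 by (intro sum.neutral) auto
        also have "dd k = hatd" using part by (simp add: dd_def)
        finally have P: "(\<Sum>j\<in>I-{i}. (1 - dd j / dmax j) * (l j)\<^sup>2)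
            = (\<Sum>j\<in>I1. (l j)\<^sup>2) + (1 - hatd / dmax k) * (l k)\<^sup>2" by simp
        have "C = B i" unfolding C_def P using B2_def 3 by (simp add: distrib_left mult.assoc)
        have "eps i \<le> 1 / B i - 1 / A + eps k" using b 3 by blast
        hence "T + eps i \<le> 1 / B i" using TA by linarith
        moreover have "T + eps i > 0" using S_eq S0 dd_nonneg[OF iI] ei by linarith
        moreover have "0 < (1 / B i) * (T + eps i)" using calculation
          by (intro mult_pos_pos) linarith+
        ultimately have "1 / (1 / B i) \<le> 1 / (T + eps i)"
          by (intro divide_left_mono) (auto simp only:)
        hence "1 / (T + eps i) \<ge> B i" by simp
        then show ?thesis using dm x1 \<open>C = B i\<close> by (simp add: mult_nonpos_nonneg)
      qed
    qed
    show ?thesis unfolding e1 e2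
    proof (rule concave_step)
      show "0 < S + eps i + dd i" using S0 dd_nonneg[OF iI] ei by linarith
      show "0 < S + eps i + x" using S0 x0 ei by linarith
      show "(x - dd i) * (1 / (S + eps i + dd i) - C) \<le> 0"
      proof -
        have eq: "S + eps i + dd i = T + eps i" using S_eq by simp
        show ?thesis unfolding eq by (rule key)
      qed
    qed
  qed
  have "nash_equilibrium I dmax eps xi l theta dd"
    unfolding nash_equilibrium_def using main dd_nonneg dd_le by blast
  then show ?thesis using h0 h1 unfolding dd_def by blast
qed

end
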